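(* Let $G$ and $H$ be graphs such that: (a) $G$ admits an automorphism $\eta$ with $\eta(v)\in N(v)$ for every $v\in V(G)$, and every orbit of $\eta$ has even length; (b) $H$ is bipartite and every vertex of $H$ has even degree. Then $\alpha_{\mathrm{od}}(\mu[G,H])\ge |H|\cdot\alpha_{\mathrm{od}}(G)$.
   Context: For graphs $G$ and $H$, $\mu[G,H]$ is the graph obtained by replacing each vertex $w\in V(H)$ with a copy $G_w$ of $G$ and, for every edge $w_1w_2\in E(H)$, adding the perfect matching between $G_{w_1}$ and $G_{w_2}$ that joins the two copies of each vertex of $G$ (i.e., $\mu[G,H]$ is the Cartesian product $G\,\Box\,H$). An odd independent set in a graph $F=(V,E)$ is an independent set $S$ such that every $v\in V\setminus S$ has either no neighbor or an odd number of neighbors in $S$; $\alpha_{\mathrm{od}}(F)$ is the maximum size of such a set. $|H|$ is the number of vertices of $H$; $N(v)$ is the open neighborhood. *)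

theory Defs
  imports Main
begin

definition graph :: "'a set \<Rightarrow> ('a \<Rightarrow> 'a \<Rightarrow> bool) \<Rightarrow> bool" where
  "graph V E \<longleftrightarrow> finite V \<and> (\<forall>x y. E x y \<longrightarrow> x \<in> V \<and> y \<in> V)
     \<and> (\<forall>x y. E x y \<longrightarrow> E y x) \<and> (\<forall>x. \<not> E x x)"

definition nbrs :: "'a set \<Rightarrow> ('a \<Rightarrow> 'a \<Rightarrow> bool) \<Rightarrow> 'a \<Rightarrow> 'a set" where
  "nbrs V E v = {u \<in> V. E v u}"

definition odd_indep :: "'a set \<Rightarrow> ('a \<Rightarrow> 'a \<Rightarrow> bool) \<Rightarrow> 'a set \<Rightarrow> bool" where
  "odd_indep V E S \<longleftrightarrow> S \<subseteq> V \<and> (\<forall>x\<in>S. \<forall>y\<in>S. \<not> E x y)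
     \<and> (\<forall>v \<in> V - S. card (nbrs V E v \<inter> S) = 0 \<or> odd (card (nbrs V E v \<inter> S)))"

definition alpha_od :: "'a set \<Rightarrow> ('a \<Rightarrow> 'a \<Rightarrow> bool) \<Rightarrow> nat" where
  "alpha_od V E = Max {card S | S. odd_indep V E S}"

text \<open>Cartesian product G \<box> H = mu[G,H].\<close>
definition cart_vert :: "'a set \<Rightarrow> 'b set \<Rightarrow> ('a \<times> 'b) set" where
  "cart_vert VG VH = VG \<times> VH"

definition cart_edge :: "'a set \<Rightarrow> ('a \<Rightarrow> 'a \<Rightarrow> bool) \<Rightarrow> 'b set \<Rightarrow> ('b \<Rightarrow> 'b \<Rightarrow> bool)
    \<Rightarrow> ('a \<times> 'b) \<Rightarrow> ('a \<times> 'b) \<Rightarrow> bool" where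
  "cart_edge VG EG VH EH p q \<longleftrightarrow> p \<in> VG \<times> VH \<and> q \<in> VG \<times> VH \<and>
     ((fst p = fst q \<and> EH (snd p) (snd q)) \<or> (snd p = snd q \<and> EG (fst p) (fst q)))"

definition automorphism :: "'a set \<Rightarrow> ('a \<Rightarrow> 'a \<Rightarrow> bool) \<Rightarrow> ('a \<Rightarrow> 'a) \<Rightarrow> bool" where
  "automorphism V E f \<longleftrightarrow> bij_betw f V V \<and> (\<forall>x\<in>V. \<forall>y\<in>V. E x y \<longleftrightarrow> E (f x) (f y))"

definition orbit :: "('a \<Rightarrow> 'a) \<Rightarrow> 'a \<Rightarrow> 'a set" where
  "orbit f v = {(f ^^ k) v | k. True}"

definition bipartite :: "'a set \<Rightarrow> ('a \<Rightarrow> 'a \<Rightarrow> bool) \<Rightarrow> bool" where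
  "bipartite V E \<longleftrightarrow> (\<exists>A B. A \<union> B = V \<and> A \<inter> B = {} \<and>
     (\<forall>x y. E x y \<longrightarrow> (x \<in> A \<and> y \<in> B) \<or> (x \<in> B \<and> y \<in> A)))"

end

theory Submission
  imports Defs
begin

lemma layer_odd:
  assumes gG: "graph VG EG" and gH: "graph VH EH"
    and AB: "A \<inter> B = {}" and bip: "\<forall>x y. EH x y \<longrightarrow> (x \<in> A \<and> y \<in> B) \<or> (x \<in> B \<and> y \<in> A)"
    and hA: "h \<in> A" and hV: "h \<in> VH" and gV: "g \<in> VG" and gP: "g \<notin> P"
    and oddP: "card (nbrs VG EG g \<inter> P) = 0 \<or> odd (card (nbrs VG EG g \<inter> P))"
    and Qne: "g \<in> Q \<Longrightarrow> nbrs VG EG g \<inter> P \<noteq> {}"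
    and evH: "even (card (nbrs VH EH h))"
  shows "card (nbrs (VG \<times> VH) (cart_edge VG EG VH EH) (g,h) \<inter> (P \<times> A \<union> Q \<times> B)) = 0
       \<or> odd (card (nbrs (VG \<times> VH) (cart_edge VG EG VH EH) (g,h) \<inter> (P \<times> A \<union> Q \<times> B)))"
proof -
  have fG: "finite VG" and fH: "finite VH" using gG gH unfolding graph_def by blast+
  have irrH: "\<And>x. \<not> EH x x" using gH unfolding graph_def by blast
  define X1 where "X1 = (nbrs VG EG g \<inter> P) \<times> {h}"
  define X2 where "X2 = (if g \<in> Q then {g} \<times> nbrs VH EH h else {})"
  have NB: "\<And>h'. h' \<in> nbrs VH EH h \<Longrightarrow> h' \<in> B \<and> h' \<notin> A"
    using bip hA AB by (auto simp: nbrs_def)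
  have eq: "nbrs (VG \<times> VH) (cart_edge VG EG VH EH) (g,h) \<inter> (P \<times> A \<union> Q \<times> B) = X1 \<union> X2"
  proof (rule set_eqI, clarify)
    fix a b
    show "((a,b) \<in> nbrs (VG \<times> VH) (cart_edge VG EG VH EH) (g,h) \<inter> (P \<times> A \<union> Q \<times> B)) = ((a,b) \<in> X1 \<union> X2)"
    proof
      assume H: "(a,b) \<in> nbrs (VG \<times> VH) (cart_edge VG EG VH EH) (g,h) \<inter> (P \<times> A \<union> Q \<times> B)"
      then have ce: "cart_edge VG EG VH EH (g,h) (a,b)" and ab: "a \<in> VG" "b \<in> VH"
        and T: "(a \<in> P \<and> b \<in> A) \<or> (a \<in> Q \<and> b \<in> B)"
        by (auto simp: nbrs_def)
      from ce have "(g = a \<and> EH h b) \<or> (h = b \<and> EG g a)" by (auto simp: cart_edge_def)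
      then show "(a,b) \<in> X1 \<union> X2"
      proof
        assume c: "g = a \<and> EH h b"
        then have "b \<in> nbrs VH EH h" using ab by (auto simp: nbrs_def)
        with NB T c show ?thesis by (auto simp: X2_def)
      next
        assume c: "h = b \<and> EG g a"
        then show ?thesis using T hA AB ab by (auto simp: X1_def nbrs_def)
      qed
    next
      assume "(a,b) \<in> X1 \<union> X2"
      then show "(a,b) \<in> nbrs (VG \<times> VH) (cart_edge VG EG VH EH) (g,h) \<inter> (P \<times> A \<union> Q \<times> B)"
        using NB hA hV gV by (auto simp: X1_def X2_def nbrs_def cart_edge_def split: if_splits)
    qed
  qed
  have fN1: "finite (nbrs VG EG g \<inter> P)" using fG by (auto simp: nbrs_def)
  have fN2: "finite (nbrs VH EH h)" using fH by (auto simp: nbrs_def)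
  have f1: "finite X1" using fN1 by (simp add: X1_def)
  have f2: "finite X2" using fN2 by (simp add: X2_def)
  have disj: "X1 \<inter> X2 = {}" using irrH by (auto simp: X1_def X2_def nbrs_def)
  have c1: "card X1 = card (nbrs VG EG g \<inter> P)" by (simp add: X1_def card_cartesian_product)
  have c2: "card X2 = (if g \<in> Q then card (nbrs VH EH h) else 0)"
    by (simp add: X2_def card_cartesian_product)
  have ceq: "card (X1 \<union> X2) = card X1 + card X2" using f1 f2 disj card_Un_disjoint by blast
  show ?thesis
  proof (cases "g \<in> Q")
    case True
    then have "card (nbrs VG EG g \<inter> P) \<noteq> 0" using Qne fN1 by auto
    then have "odd (card (nbrs VG EG g \<inter> P))" using oddP by auto
    then show ?thesis using eq ceq c1 c2 True evH by auto
  next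
    case False
    then show ?thesis using eq ceq c1 c2 oddP by auto
  qed
qed

theorem theorem3:
  fixes VG :: "'a set" and EG :: "'a \<Rightarrow> 'a \<Rightarrow> bool"
    and VH :: "'b set" and EH :: "'b \<Rightarrow> 'b \<Rightarrow> bool"
    and \<eta> :: "'a \<Rightarrow> 'a"
  assumes "graph VG EG" and "graph VH EH"
    and "automorphism VG EG \<eta>"
    and "\<forall>v\<in>VG. \<eta> v \<in> nbrs VG EG v"
    and "\<forall>v\<in>VG. even (card (orbit \<eta> v))"
    and "bipartite VH EH"
    and "\<forall>v\<in>VH. even (card (nbrs VH EH v))"
  shows "alpha_od (cart_vert VG VH) (cart_edge VG EG VH EH) \<ge> card VH * alpha_od VG EG"
proof -
  note gG = assms(1) and gH = assms(2)
  have fG: "finite VG" and fH: "finite VH" using gG gH unfolding graph_def by blast+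
  have symG: "\<And>x y. EG x y \<Longrightarrow> EG y x" using gG unfolding graph_def by blast
  have bij: "bij_betw \<eta> VG VG" and autE: "\<And>x y. x \<in> VG \<Longrightarrow> y \<in> VG \<Longrightarrow> EG x y \<longleftrightarrow> EG (\<eta> x) (\<eta> y)"
    using assms(3) unfolding automorphism_def by blast+
  have autD: "\<And>x y. x \<in> VG \<Longrightarrow> y \<in> VG \<Longrightarrow> EG (\<eta> x) (\<eta> y) \<Longrightarrow> EG x y"
    and autI: "\<And>x y. x \<in> VG \<Longrightarrow> y \<in> VG \<Longrightarrow> EG x y \<Longrightarrow> EG (\<eta> x) (\<eta> y)"
    using autE by blast+
  have inj: "inj_on \<eta> VG" and img: "\<eta> ` VG = VG" using bij by (auto simp: bij_betw_def)
  have etaN: "\<And>v. v \<in> VG \<Longrightarrow> EG v (\<eta> v)" using assms(4) by (auto simp: nbrs_def)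
  obtain A B where AB1: "A \<union> B = VH" and AB: "A \<inter> B = {}"
    and bip: "\<forall>x y. EH x y \<longrightarrow> (x \<in> A \<and> y \<in> B) \<or> (x \<in> B \<and> y \<in> A)"
    using assms(6) unfolding bipartite_def by blast
  have bip': "\<forall>x y. EH x y \<longrightarrow> (x \<in> B \<and> y \<in> A) \<or> (x \<in> A \<and> y \<in> B)" using bip by blast
  define SS where "SS = {card S | S. odd_indep VG EG S}"
  have "SS \<subseteq> card ` Pow VG" unfolding SS_def odd_indep_def by blast
  then have fSS: "finite SS" by (rule finite_subset) (simp add: fG)
  have "odd_indep VG EG {}" by (simp add: odd_indep_def)
  then have "SS \<noteq> {}" by (auto simp: SS_def)
  moreover have "alpha_od VG EG = Max SS" by (simp add: alpha_od_def SS_def)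
  ultimately have "alpha_od VG EG \<in> SS" using fSS Max_in by metis
  then obtain S where S: "odd_indep VG EG S" and cS: "card S = alpha_od VG EG"
    by (auto simp: SS_def)
  have SV: "S \<subseteq> VG" and Sind: "\<forall>x\<in>S. \<forall>y\<in>S. \<not> EG x y"
    and Sodd: "\<forall>v \<in> VG - S. card (nbrs VG EG v \<inter> S) = 0 \<or> odd (card (nbrs VG EG v \<inter> S))"
    using S by (auto simp: odd_indep_def)
  define Q where "Q = \<eta> ` S"
  have QV: "Q \<subseteq> VG" using SV img by (auto simp: Q_def)
  have Qind: "\<forall>x\<in>Q. \<forall>y\<in>Q. \<not> EG x y" using Sind autD SV unfolding Q_def by blast
  have SQ: "S \<inter> Q = {}"
  proof (rule ccontr)
    assume "S \<inter> Q \<noteq> {}"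
    then obtain s where "s \<in> S" "\<eta> s \<in> S" by (auto simp: Q_def)
    then show False using Sind etaN SV by blast
  qed
  define T where "T = S \<times> A \<union> Q \<times> B"
  define V where "V = VG \<times> VH"
  define E where "E = cart_edge VG EG VH EH"
  have cQ: "card Q = card S" unfolding Q_def using inj SV card_image inj_on_subset by blast
  have fA: "finite A" and fB: "finite B" using AB1 fH by (auto intro: finite_subset)
  have cT: "card T = card VH * card S"
  proof -
    have "card T = card (S \<times> A) + card (Q \<times> B)"
      unfolding T_def using AB fA fB SV QV fG
      by (intro card_Un_disjoint) (auto intro: finite_subset)
    also have "\<dots> = card S * (card A + card B)" using cQ by (simp add: card_cartesian_product algebra_simps)
    also have "card A + card B = card VH" using AB1 AB fA fB card_Un_disjoint by metis
    finally show ?thesis by simp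
  qed
  have Tind: "odd_indep V E T"
    unfolding odd_indep_def
  proof (intro conjI ballI)
    show "T \<subseteq> V" using SV QV AB1 by (auto simp: T_def V_def)
  next
    fix x y assume x: "x \<in> T" and y: "y \<in> T"
    obtain a b where xab: "x = (a,b)" by fastforce
    obtain c d where ycd: "y = (c,d)" by fastforce
    have ex: "(a \<in> S \<and> b \<in> A) \<or> (a \<in> Q \<and> b \<in> B)" using x unfolding T_def xab by simp
    have ey: "(c \<in> S \<and> d \<in> A) \<or> (c \<in> Q \<and> d \<in> B)" using y unfolding T_def ycd by simp
    show "\<not> E x y"
    proof
      assume "E x y"
      then have "(a = c \<and> EH b d) \<or> (b = d \<and> EG a c)"
        unfolding E_def cart_edge_def xab ycd by simp
      then show False
      proof
        assume c: "a = c \<and> EH b d"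
        then have "(b \<in> A \<and> d \<in> B) \<or> (b \<in> B \<and> d \<in> A)" using bip by blast
        moreover have "a \<notin> S \<or> a \<notin> Q" using SQ by blast
        moreover have "b \<notin> A \<or> b \<notin> B" using AB by blast
        moreover have "d \<notin> A \<or> d \<notin> B" using AB by blast
        ultimately show False using ex ey c by blast
      next
        assume c: "b = d \<and> EG a c"
        have "b \<notin> A \<or> b \<notin> B" using AB by blast
        moreover have "a \<in> S \<Longrightarrow> c \<in> S \<Longrightarrow> False" using Sind c by blast
        moreover have "a \<in> Q \<Longrightarrow> c \<in> Q \<Longrightarrow> False" using Qind c by blast
        ultimately show False using ex ey c by blast
      qed
    qed
  next
    fix v assume v: "v \<in> V - T"
    obtain g h where vgh: "v = (g,h)" by fastforce
    have gV: "g \<in> VG" and hV: "h \<in> VH" using v vgh by (auto simp: V_def)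
    show "card (nbrs V E v \<inter> T) = 0 \<or> odd (card (nbrs V E v \<inter> T))"
    proof (cases "h \<in> A")
      case True
      then have gS: "g \<notin> S" using v vgh by (auto simp: T_def)
      have "card (nbrs VG EG g \<inter> S) = 0 \<or> odd (card (nbrs VG EG g \<inter> S))" using Sodd gV gS by auto
      moreover have "g \<in> Q \<Longrightarrow> nbrs VG EG g \<inter> S \<noteq> {}"
      proof -
        assume "g \<in> Q"
        then obtain s where "s \<in> S" "g = \<eta> s" by (auto simp: Q_def)
        then have "s \<in> nbrs VG EG g \<inter> S" using etaN symG SV unfolding nbrs_def by blast
        then show ?thesis by auto
      qed
      ultimately show ?thesis
        using layer_odd[OF gG gH AB bip True hV gV gS] assms(7) hV
        unfolding vgh V_def E_def T_def by blast
    next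
      case False
      then have hB: "h \<in> B" using hV AB1 by auto
      then have gQ: "g \<notin> Q" using v vgh AB by (auto simp: T_def)
      have AB': "B \<inter> A = {}" using AB by auto
      obtain g0 where g0: "g0 \<in> VG" "g = \<eta> g0" using gV img by auto
      have g0S: "g0 \<notin> S" using gQ g0 by (auto simp: Q_def)
      have "nbrs VG EG g \<inter> Q = \<eta> ` (nbrs VG EG g0 \<inter> S)"
      proof
        show "nbrs VG EG g \<inter> Q \<subseteq> \<eta> ` (nbrs VG EG g0 \<inter> S)"
          using g0 autD SV by (auto simp: nbrs_def Q_def)
        show "\<eta> ` (nbrs VG EG g0 \<inter> S) \<subseteq> nbrs VG EG g \<inter> Q"
          using g0 autI SV img by (auto simp: nbrs_def Q_def)
      qed
      moreover have "inj_on \<eta> (nbrs VG EG g0 \<inter> S)" using inj by (rule inj_on_subset) (auto simp: nbrs_def)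
      ultimately have ceq: "card (nbrs VG EG g \<inter> Q) = card (nbrs VG EG g0 \<inter> S)"
        by (simp add: card_image)
      have "card (nbrs VG EG g \<inter> Q) = 0 \<or> odd (card (nbrs VG EG g \<inter> Q))"
        using Sodd g0 g0S ceq by auto
      moreover have "g \<in> S \<Longrightarrow> nbrs VG EG g \<inter> Q \<noteq> {}"
      proof -
        assume gS: "g \<in> S"
        then have "\<eta> g \<in> nbrs VG EG g \<inter> Q" using etaN gV img by (auto simp: nbrs_def Q_def)
        then show ?thesis by auto
      qed
      moreover have "T = Q \<times> B \<union> S \<times> A" by (auto simp: T_def)
      ultimately show ?thesis
        using layer_odd[OF gG gH AB' bip' hB hV gV gQ, of S] assms(7) hV
        unfolding vgh V_def E_def by metis
    qed
  qed
  have fV: "finite V" using fG fH by (simp add: V_def)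
  have "{card S | S. odd_indep V E S} \<subseteq> card ` Pow V" unfolding odd_indep_def by blast
  then have fin2: "finite {card S | S. odd_indep V E S}" by (rule finite_subset) (simp add: fV)
  have "card T \<le> Max {card S | S. odd_indep V E S}"
    using Tind fin2 by (intro Max_ge) auto
  then show ?thesis using cT cS by (simp add: alpha_od_def V_def E_def cart_vert_def)
qed

end
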